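(* Consider an $n$-link rigid manipulator with only rotational joints, $\boldsymbol\tau=H(\mathbf q)\ddot{\mathbf q}+C(\mathbf q,\dot{\mathbf q})\dot{\mathbf q}+\mathbf g(\mathbf q)$, satisfying the following assumptions: (P1) $H(\mathbf q)$ is symmetric positive definite and $\dot H(\mathbf q)-2C(\mathbf q,\dot{\mathbf q})$ is skew-symmetric; (P2) $\|H(\mathbf q)\|<\infty$, $\|H(\mathbf q)-H(\mathbf q')\|\le L\|\mathbf q-\mathbf q'\|$ for some $L>0$; $\|C(\mathbf q,\dot{\mathbf q})\|\le c_C\|\dot{\mathbf q}\|$ and $C(\mathbf q,\dot{\mathbf q})\dot{\mathbf p}=C(\mathbf q,\dot{\mathbf p})\dot{\mathbf q}$ for all $\mathbf q,\mathbf q',\dot{\mathbf q},\dot{\mathbf p}$; (C1) $\|\mathbf q_d\|<c_q$, $\|\dot{\mathbf q}_d\|<c_{\dot q}$, $\|\ddot{\mathbf q}_d\|<c_{\ddot q}$; (C2) $K_p,K_d$ positive definite with $\sigma_{\min}(K_d)>\beta$; (C3) $\|H(\mathbf q)\ddot{\mathbf q}_d+C(\mathbf q,\dot{\mathbf q})\dot{\mathbf q}_d+\mathbf g(\mathbf q)-\hat H(\mathbf q)\ddot{\mathbf q}_d-\hat C(\mathbf q,\dot{\mathbf q})\dot{\mathbf q}_d-\hat{\mathbf g}(\mathbf q)\|\le\alpha+\beta\|\dot{\mathbf q}\|$ for all $\mathbf q,\dot{\mathbf q}$ with $\alpha,\beta\ge0$, this model error being continuous in $(\ddot{\mathbf q}_d,\dot{\mathbf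 q}_d,\dot{\mathbf q},\mathbf q)$. Apply the deterministic control law $$\boldsymbol\tau=\hat H(\mathbf q)\ddot{\mathbf q}_d+\hat C(\mathbf q,\dot{\mathbf q})\dot{\mathbf q}_d+\hat{\mathbf g}(\mathbf q)+\boldsymbol\mu(\mathbf q_c)-K_d\dot{\mathbf e}-K_p\mathbf e,$$ with $\mathbf e=\mathbf q-\mathbf q_d$, $\mathbf q_c=[\ddot{\mathbf q}_d^\top,\dot{\mathbf q}_d^\top,\mathbf q^\top]^\top$ and $\boldsymbol\mu=[\mu_1,\dots,\mu_n]^\top$ the posterior mean functions of $n$ Gaussian processes with squared exponential kernel. Then the tracking error $\mathbf e$ is bounded.
   Context: For $i=1,\dots,n$, $\mu_i(\mathbf x^* )=\mathbf k_{\varphi_i}(\mathbf x^*,X)^\top(K_{\varphi_i}(X,X)+\sigma_{n,i}^2I_m)^{-1}Y_{:,i}$ is the posterior mean of a zero-mean GP with squared exponential kernel $k_{\varphi_i}(\mathbf x,\mathbf x')=\sigma_{f,i}^2\exp(-\|\mathbf x-\mathbf x'\|^2/(2\lambda_i^2))$, conditioned on $m$ training inputs $X=[\mathbf x_1,\dots,\mathbf x_m]$ and outputs $Y_{:,i}$, with noise variance $\sigma_{n,i}^2\ge0$; $K_{\varphi_i}(X,X)$ is the Gram matrix on training inputs and $\mathbf k_{\varphi_i}(\mathbf x^*,X)$ the vector of kernel evaluations between $\mathbf x^*$ and the training inputs. $\hat H,\hat C,\hat{\mathbf g}$ are given estimates of $H,C,\mathbf g$, and $\sigma_{\min}$ denotes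 the smallest singular value. *)

theory Defs
  imports "HOL-Analysis.Analysis"
begin

definition se_kernel :: "real \<Rightarrow> real \<Rightarrow> 'a::real_normed_vector \<Rightarrow> 'a \<Rightarrow> real" where
  "se_kernel sf lam x x' = sf^2 * exp (- ((norm (x - x'))\<^sup>2) / (2 * lam\<^sup>2))"

text \<open>Posterior mean of a zero-mean GP with SE kernel, training inputs X (indexed by the
  finite type 'm of training points), training outputs y, noise standard deviation sn.\<close>
definition gp_mean :: "real \<Rightarrow> real \<Rightarrow> real \<Rightarrow> ('m::finite \<Rightarrow> 'a::real_normed_vector)
    \<Rightarrow> real^'m \<Rightarrow> 'a \<Rightarrow> real" where
  "gp_mean sf lam sn X y x =
     (\<chi> j. se_kernel sf lam x (X j)) \<bullet>
     (matrix_inv ((\<chi> j k. se_kernel sf lam (X j) (X k)) + (sn^2) *\<^sub>R mat 1) *v y)"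

definition gp_mean_vec :: "('n \<Rightarrow> real) \<Rightarrow> ('n \<Rightarrow> real) \<Rightarrow> ('n \<Rightarrow> real)
    \<Rightarrow> ('m::finite \<Rightarrow> 'a::real_normed_vector) \<Rightarrow> ('m \<Rightarrow> real^'n) \<Rightarrow> 'a \<Rightarrow> real^'n" where
  "gp_mean_vec sf lam sn X Y x = (\<chi> i. gp_mean (sf i) (lam i) (sn i) X (\<chi> j. Y j $ i) x)"

definition mnorm :: "real^'n^'m \<Rightarrow> real" where
  "mnorm A = onorm (\<lambda>x. A *v x)"

definition sym_pos_def :: "real^'n^'n \<Rightarrow> bool" where
  "sym_pos_def A \<longleftrightarrow> transpose A = A \<and> (\<forall>x. x \<noteq> 0 \<longrightarrow> x \<bullet> (A *v x) > 0)"

definition skew_sym :: "real^'n^'n \<Rightarrow> bool" where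
  "skew_sym A \<longleftrightarrow> transpose A = - A"

definition sigma_min :: "real^'n^'n \<Rightarrow> real" where
  "sigma_min A = sqrt (Inf {l. \<exists>v. v \<noteq> 0 \<and> (transpose A ** A) *v v = l *\<^sub>R v})"

end

theory Submission
  imports Defs
begin

lemma inner_mv_transpose:
  fixes A :: "real^'n^'m"
  shows "x \<bullet> (A *v y) = (transpose A *v x) \<bullet> y"
  by (simp add: inner_vec_def matrix_vector_mult_def transpose_def sum_distrib_left sum_distrib_right mult_ac)
     (rule sum.swap)

lemma inner_mv_sym:
  fixes A :: "real^'n^'n"
  assumes "transpose A = A"
  shows "x \<bullet> (A *v y) = y \<bullet> (A *v x)"
  using inner_mv_transpose[of x A y] assms by (simp add: inner_commute)

lemma mv_bilinear: "bounded_bilinear (\<lambda>(A::real^'n^'m) (v::real^'n). A *v v)"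
proof -
  have "bilinear (\<lambda>(A::real^'n^'m) (v::real^'n). A *v v)"
    unfolding bilinear_def
    by (auto simp: linear_iff matrix_vector_mult_add_rdistrib matrix_vector_right_distrib scaleR_matrix_vector_assoc
        matrix_vector_mult_diff_distrib matrix_vector_mult_scaleR)
  then show ?thesis by (simp add: bilinear_conv_bounded_bilinear)
qed

lemma mnorm_mv: "norm (A *v x) \<le> mnorm A * norm x"
  unfolding mnorm_def by (rule onorm[OF matrix_vector_mul_bounded_linear])

lemma mnorm_ge0: "mnorm A \<ge> 0"
  unfolding mnorm_def by (rule onorm_pos_le[OF matrix_vector_mul_bounded_linear])

lemma quad_bound: "\<bar>a \<bullet> (A *v b)\<bar> \<le> mnorm A * norm a * norm b"
proof -
  have "\<bar>a \<bullet> (A *v b)\<bar> \<le> norm a * norm (A *v b)" by (rule Cauchy_Schwarz_ineq2)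
  also have "\<dots> \<le> norm a * (mnorm A * norm b)" by (simp add: mult_left_mono mnorm_mv)
  finally show ?thesis by (simp add: mult_ac)
qed

lemma psd_zero_imp:
  fixes A :: "real^'n^'n"
  assumes sym: "transpose A = A" and psd: "\<And>y. y \<bullet> (A *v y) \<ge> 0" and z: "x \<bullet> (A *v x) = 0"
  shows "A *v x = 0"
proof -
  have key: "y \<bullet> (A *v x) = 0" for y
  proof (rule ccontr)
    define c where "c = y \<bullet> (A *v x)"
    define d where "d = y \<bullet> (A *v y)"
    assume "y \<bullet> (A *v x) \<noteq> 0"
    then have c0: "c \<noteq> 0" by (simp add: c_def)
    have d0: "d \<ge> 0" using psd by (simp add: d_def)
    have "0 \<le> (x + t *\<^sub>R y) \<bullet> (A *v (x + t *\<^sub>R y))" for t using psd by blast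
    also have "(x + t *\<^sub>R y) \<bullet> (A *v (x + t *\<^sub>R y)) = 2 * t * c + t^2 * d" for t
      using z inner_mv_sym[OF sym, of x y]
      by (simp add: c_def d_def algebra_simps inner_add_left inner_add_right power2_eq_square)
    finally have h: "0 \<le> 2 * t * c + t^2 * d" for t .
    define s where "s = 1 / (d + 1)"
    have s0: "s > 0" using d0 by (simp add: s_def)
    have sd: "s * d = 1 - s" using d0 by (simp add: s_def field_simps)
    define t where "t = - c * s"
    have "2 * t * c + t^2 * d = c^2 * s * (s * d - 2)"
      by (simp add: t_def power2_eq_square algebra_simps)
    also have "\<dots> < 0"
      using s0 c0 sd by (intro mult_pos_neg) auto
    finally show False using h[of t] by linarith
  qed
  show ?thesis using key[of "A *v x"] by simp
qed

lemma spd_lower: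
  fixes K :: "real^'n^'n"
  assumes "sym_pos_def K"
  shows "\<exists>l>0. (\<forall>x. l * (norm x)^2 \<le> x \<bullet> (K *v x)) \<and> sigma_min K \<le> l"
proof -
  have sym: "transpose K = K" and pd: "\<And>x. x \<noteq> 0 \<Longrightarrow> x \<bullet> (K *v x) > 0"
    using assms by (auto simp: sym_pos_def_def)
  have ne: "sphere (0::real^'n) 1 \<noteq> {}"
  proof -
    have "axis undefined (1::real) \<in> sphere (0::real^'n) 1" by simp
    then show ?thesis by blast
  qed
  have cont: "continuous_on (sphere 0 1) (\<lambda>x::real^'n. x \<bullet> (K *v x))"
    by (intro continuous_intros linear_continuous_on matrix_vector_mul_bounded_linear)
  obtain x0 where x0: "x0 \<in> sphere 0 1" and mn: "\<forall>y\<in>sphere 0 1. x0 \<bullet> (K *v x0) \<le> y \<bullet> (K *v y)"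
    using continuous_attains_inf[OF compact_sphere ne cont] by blast
  define l where "l = x0 \<bullet> (K *v x0)"
  have nx0: "norm x0 = 1" using x0 by simp
  have "x0 \<noteq> 0" using nx0 by auto
  then have l0: "l > 0" unfolding l_def using pd by blast
  have lb: "l * (norm x)^2 \<le> x \<bullet> (K *v x)" for x
  proof (cases "x = 0")
    case True then show ?thesis by simp
  next
    case False
    define u where "u = (1 / norm x) *\<^sub>R x"
    have "u \<in> sphere 0 1" using False by (simp add: u_def)
    then have "l \<le> u \<bullet> (K *v u)" using mn l_def by auto
    also have "u \<bullet> (K *v u) = (x \<bullet> (K *v x)) / (norm x)^2"
      by (simp add: u_def matrix_vector_mult_scaleR power2_eq_square)
    finally show ?thesis using False by (simp add: pos_le_divide_eq)
  qed
  define A where "A = K - l *\<^sub>R mat 1"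
  have Av: "A *v y = K *v y - l *\<^sub>R y" for y
    by (simp add: A_def matrix_vector_mult_diff_rdistrib scaleR_matrix_vector_assoc[symmetric])
  have symA: "transpose A = A"
    using sym by (simp add: A_def transpose_def vec_eq_iff mat_def)
  have psdA: "y \<bullet> (A *v y) \<ge> 0" for y
    using lb[of y] by (simp add: Av inner_diff_right power2_norm_eq_inner)
  have zA: "x0 \<bullet> (A *v x0) = 0"
    using nx0 by (simp add: Av inner_diff_right l_def power2_norm_eq_inner[symmetric])
  have eig: "K *v x0 = l *\<^sub>R x0"
    using psd_zero_imp[OF symA psdA zA] by (simp add: Av)
  have "(transpose K ** K) *v x0 = (l^2) *\<^sub>R x0"
    using eig sym by (simp add: matrix_vector_mul_assoc[symmetric] matrix_vector_mult_scaleR power2_eq_square)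
  then have mem: "l^2 \<in> {l. \<exists>v. v \<noteq> 0 \<and> (transpose K ** K) *v v = l *\<^sub>R v}"
    using nx0 by (auto intro!: exI[of _ x0])
  have bdd: "bdd_below {l. \<exists>v. v \<noteq> 0 \<and> (transpose K ** K) *v v = l *\<^sub>R v}"
  proof (rule bdd_belowI[of _ 0], clarsimp)
    fix m and v :: "real^'n"
    assume v: "v \<noteq> 0" "(transpose K ** K) *v v = m *\<^sub>R v"
    have "v \<bullet> ((transpose K ** K) *v v) = v \<bullet> (transpose K *v (K *v v))"
      by (simp only: matrix_vector_mul_assoc)
    also have "\<dots> = (K *v v) \<bullet> (K *v v)"
      by (simp only: inner_mv_transpose transpose_transpose)
    finally have "v \<bullet> ((transpose K ** K) *v v) = (K *v v) \<bullet> (K *v v)" .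
    then have "m * (v \<bullet> v) \<ge> 0" using v by simp
    moreover have "v \<bullet> v > 0" using v by simp
    ultimately show "0 \<le> m" by (simp add: zero_le_mult_iff)
  qed
  have "sigma_min K \<le> sqrt (l^2)"
    unfolding sigma_min_def by (rule real_sqrt_le_mono, rule cInf_lower[OF mem bdd])
  then have "sigma_min K \<le> l" using l0 by simp
  then show ?thesis using l0 lb by blast
qed

lemma bound_by_deriv:
  fixes W W' :: "real \<Rightarrow> real"
  assumes der: "\<forall>t\<ge>0. (W has_real_derivative W' t) (at t within {0..})"
    and neg: "\<forall>t\<ge>0. W t > R \<longrightarrow> W' t < 0"
  shows "\<forall>t\<ge>0. W t \<le> max (W 0) R"
proof (intro allI impI, rule ccontr)
  define m where "m = max (W 0) R"
  fix t1 :: real assume t1: "t1 \<ge> 0" and "\<not> W t1 \<le> max (W 0) R"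
  then have Wt1: "W t1 > m" by (auto simp: m_def max_def split: if_splits)
  have cont: "continuous_on {0..} W"
    by (rule DERIV_continuous_on) (use der in auto)
  then have cont1: "continuous_on {0..t1} W" by (rule continuous_on_subset) auto
  define S where "S = {0..t1} \<inter> W -` {..m}"
  have "closed S" unfolding S_def by (rule continuous_closed_preimage[OF cont1]) auto
  then have cS: "compact S" unfolding S_def by (simp add: compact_eq_bounded_closed bounded_Int)
  have "0 \<in> S" using t1 by (simp add: S_def m_def)
  then obtain t0 where t0: "t0 \<in> S" and mx: "\<forall>s\<in>S. s \<le> t0"
    using compact_attains_sup[OF cS] by blast
  have t0le: "0 \<le> t0" "t0 \<le> t1" "W t0 \<le> m" using t0 by (auto simp: S_def)
  have "t0 \<noteq> t1" using t0le Wt1 by auto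
  then have lt: "t0 < t1" using t0le by simp
  have above: "W s > m" if "t0 < s" "s \<le> t1" for s
  proof (rule ccontr)
    assume "\<not> W s > m"
    then have "s \<in> S" using that t0le by (auto simp: S_def)
    then show False using mx that by auto
  qed
  have cont2: "continuous_on {t0..t1} W" by (rule continuous_on_subset[OF cont]) (use t0le in auto)
  have derat: "(W has_derivative (*) (W' x)) (at x)" if "t0 < x" "x < t1" for x
  proof -
    have "x \<in> interior {0..}" using that t0le by simp
    then have e: "at x within {0..} = at x" by (rule at_within_interior)
    have "(W has_real_derivative W' x) (at x within {0..})" using der that t0le by auto
    then have "(W has_real_derivative W' x) (at x)" by (simp only: e)
    then show ?thesis by (rule has_field_derivative_imp_has_derivative)
  qed
  obtain \<xi> where xi: "t0 < \<xi>" "\<xi> < t1" "W t1 - W t0 = W' \<xi> * (t1 - t0)"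
    using mvt[OF lt cont2 derat] by blast
  have "W \<xi> > R" using above[of \<xi>] xi by (simp add: m_def)
  then have "W' \<xi> < 0" using neg xi t0le by auto
  then have "W' \<xi> * (t1 - t0) < 0" using lt by (simp add: mult_neg_pos)
  then show False using xi t0le Wt1 by linarith
qed

lemma se_kernel_le: "se_kernel sf lam x x' \<le> sf^2"
  unfolding se_kernel_def
  by (rule mult_left_le) (auto simp: divide_nonpos_nonneg)

lemma se_kernel_ge: "se_kernel sf lam x x' \<ge> 0"
  unfolding se_kernel_def by simp

lemma gp_mean_bounded:
  fixes X :: "'m::finite \<Rightarrow> 'x::real_normed_vector"
  shows "\<exists>M. \<forall>x. \<bar>gp_mean sf lam sn X y x\<bar> \<le> M"
proof -
  define c where "c = matrix_inv ((\<chi> j k. se_kernel sf lam (X j) (X k)) + (sn^2) *\<^sub>R mat 1) *v y"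
  have "\<bar>gp_mean sf lam sn X y x\<bar> \<le> (real CARD('m) * sf^2) * norm c" for x
  proof -
    have "\<bar>gp_mean sf lam sn X y x\<bar> \<le> norm (\<chi> j. se_kernel sf lam x (X j)) * norm c"
      unfolding gp_mean_def c_def[symmetric] by (rule Cauchy_Schwarz_ineq2)
    also have "norm (\<chi> j. se_kernel sf lam x (X j)) \<le> real CARD('m) * sf^2"
    proof -
      have "norm (\<chi> j. se_kernel sf lam x (X j)) \<le> (\<Sum>j\<in>UNIV. \<bar>(\<chi> j. se_kernel sf lam x (X j)) $ j\<bar>)"
        by (rule norm_le_l1_cart)
      also have "\<dots> \<le> (\<Sum>j\<in>(UNIV::'m set). sf^2)"
      proof (intro sum_mono)
        fix j
        have "0 \<le> se_kernel sf lam x (X j)" "se_kernel sf lam x (X j) \<le> sf^2"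
          by (rule se_kernel_ge, rule se_kernel_le)
        then show "\<bar>(\<chi> j. se_kernel sf lam x (X j)) $ j\<bar> \<le> sf^2" by simp
      qed
      finally show ?thesis by simp
    qed
    then have "norm (\<chi> j. se_kernel sf lam x (X j)) * norm c \<le> real CARD('m) * sf^2 * norm c"
      by (rule mult_right_mono) simp
    finally show ?thesis .
  qed
  then show ?thesis by blast
qed

lemma gp_vec_bounded: "\<exists>M. \<forall>x. norm (gp_mean_vec sf lam sn X Y x) \<le> M"
proof -
  have "\<forall>i. \<exists>M. \<forall>x. \<bar>gp_mean (sf i) (lam i) (sn i) X (\<chi> j. Y j $ i) x\<bar> \<le> M"
    using gp_mean_bounded by blast
  then obtain M where M: "\<And>i x. \<bar>gp_mean (sf i) (lam i) (sn i) X (\<chi> j. Y j $ i) x\<bar> \<le> M i"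
    by metis
  have "norm (gp_mean_vec sf lam sn X Y x) \<le> sum M UNIV" for x
  proof -
    have "norm (gp_mean_vec sf lam sn X Y x) \<le> (\<Sum>i\<in>UNIV. \<bar>gp_mean_vec sf lam sn X Y x $ i\<bar>)"
      by (rule norm_le_l1_cart)
    also have "\<dots> \<le> sum M UNIV"
      by (rule sum_mono) (simp add: gp_mean_vec_def M)
    finally show ?thesis .
  qed
  then show ?thesis by blast
qed

lemma quad_deriv:
  fixes a b :: "real \<Rightarrow> real^'n" and M :: "real \<Rightarrow> real^'n^'n"
  assumes a: "(a has_vector_derivative a') (at t within S)"
    and M: "(M has_vector_derivative M') (at t within S)"
    and b: "(b has_vector_derivative b') (at t within S)"
  shows "((\<lambda>t. a t \<bullet> (M t *v b t)) has_real_derivative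
           (a' \<bullet> (M t *v b t) + a t \<bullet> (M' *v b t) + a t \<bullet> (M t *v b'))) (at t within S)"
proof -
  have mb: "((\<lambda>t. M t *v b t) has_vector_derivative (M t *v b' + M' *v b t)) (at t within S)"
    using bounded_bilinear.has_vector_derivative[OF mv_bilinear M b] .
  have "((\<lambda>t. a t \<bullet> (M t *v b t)) has_vector_derivative
          (a t \<bullet> (M t *v b' + M' *v b t) + a' \<bullet> (M t *v b t))) (at t within S)"
    using bounded_bilinear.has_vector_derivative[OF bounded_bilinear_inner a mb] .
  then show ?thesis
    by (simp add: has_real_derivative_iff_has_vector_derivative inner_add_right algebra_simps)
qed

lemma phi_deriv:
  fixes e :: "real \<Rightarrow> real^'n"
  assumes d: "(e has_vector_derivative e') (at t within S)"
  shows "\<exists>p. ((\<lambda>t. inverse (sqrt (1 + e t \<bullet> e t)) *\<^sub>R e t) has_vector_derivative p) (at t within S)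
              \<and> norm p \<le> 2 * norm e'"
proof -
  define D where "D = e t \<bullet> e' + e' \<bullet> e t"
  define s where "s = sqrt (1 + e t \<bullet> e t)"
  have pos: "1 + e t \<bullet> e t > 0" by (simp add: add_pos_nonneg)
  have s1: "s \<ge> 1" unfolding s_def by simp
  have ss: "s^2 = 1 + (norm (e t))^2" unfolding s_def using pos by (simp add: power2_norm_eq_inner)
  have d1: "((\<lambda>t. 1 + e t \<bullet> e t) has_real_derivative D) (at t within S)"
  proof -
    have "((\<lambda>t. e t \<bullet> e t) has_vector_derivative (e t \<bullet> e' + e' \<bullet> e t)) (at t within S)"
      using bounded_bilinear.has_vector_derivative[OF bounded_bilinear_inner d d] .
    then have "((\<lambda>t. 1 + e t \<bullet> e t) has_vector_derivative (0 + (e t \<bullet> e' + e' \<bullet> e t))) (at t within S)"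
      by (intro has_vector_derivative_add) auto
    then show ?thesis by (simp add: has_real_derivative_iff_has_vector_derivative D_def)
  qed
  have d2: "((\<lambda>t. sqrt (1 + e t \<bullet> e t)) has_real_derivative (inverse s / 2 * D)) (at t within S)"
    using DERIV_chain2[OF DERIV_real_sqrt[OF pos] d1] by (simp add: s_def)
  have d3: "((\<lambda>t. inverse (sqrt (1 + e t \<bullet> e t))) has_real_derivative
              - (inverse s * (inverse s / 2 * D) * inverse s)) (at t within S)"
  proof -
    have "sqrt (1 + e t \<bullet> e t) \<noteq> 0" using pos by simp
    from DERIV_inverse'[OF d2 this] show ?thesis by (simp add: s_def)
  qed
  define p where "p = inverse s *\<^sub>R e' + (- (inverse s * (inverse s / 2 * D) * inverse s)) *\<^sub>R e t"
  have dp: "((\<lambda>t. inverse (sqrt (1 + e t \<bullet> e t)) *\<^sub>R e t) has_vector_derivative p) (at t within S)"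
    unfolding p_def using has_vector_derivative_scaleR[OF d3 d] by (simp add: s_def)
  have b1: "norm (inverse s *\<^sub>R e') \<le> norm e'"
    using s1 by (simp add: divide_le_eq_1 field_simps mult_le_cancel_right1)
  have Dle: "\<bar>D\<bar> \<le> 2 * norm (e t) * norm e'"
    unfolding D_def using Cauchy_Schwarz_ineq2[of "e t" e'] by (simp add: inner_commute)
  have "norm ((- (inverse s * (inverse s / 2 * D) * inverse s)) *\<^sub>R e t)
        = \<bar>D\<bar> * norm (e t) / (2 * s^3)"
    using s1 by (simp add: field_simps abs_mult power3_eq_cube)
  also have "\<dots> \<le> (2 * norm (e t) * norm e') * norm (e t) / (2 * s^3)"
    using s1 Dle by (intro divide_right_mono mult_right_mono) auto
  also have "\<dots> = norm e' * ((norm (e t))^2 / s^2) / s"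
    using s1 by (simp add: field_simps power2_eq_square power3_eq_cube)
  also have "\<dots> \<le> norm e' * 1 / 1"
  proof -
    have q: "(norm (e t))^2 / s^2 \<le> 1" unfolding ss
      by (simp add: divide_le_eq_1 add_pos_nonneg)
    have "norm e' * ((norm (e t))^2 / s^2) \<le> norm e' * 1"
      using q by (intro mult_left_mono) auto
    moreover have "norm e' * ((norm (e t))^2 / s^2) / s \<le> norm e' * ((norm (e t))^2 / s^2) / 1"
      using s1 by (intro divide_left_mono) auto
    ultimately show ?thesis by simp
  qed
  finally have b2: "norm ((- (inverse s * (inverse s / 2 * D) * inverse s)) *\<^sub>R e t) \<le> norm e'" by simp
  have "norm p \<le> 2 * norm e'"
    unfolding p_def using norm_triangle_ineq[of "inverse s *\<^sub>R e'" "(- (inverse s * (inverse s / 2 * D) * inverse s)) *\<^sub>R e t"] b1 b2 by linarith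
  then show ?thesis using dp by blast
qed

lemma linear_transpose: "bounded_linear (transpose :: real^'n^'m \<Rightarrow> real^'m^'n)"
proof -
  have "linear (transpose :: real^'n^'m \<Rightarrow> real^'m^'n)"
    by (auto simp: linear_iff transpose_def vec_eq_iff)
  then show ?thesis by (simp add: linear_conv_bounded_linear)
qed

lemma deriv_sym:
  fixes H :: "real^'n \<Rightarrow> real^'n^'n"
  assumes d: "(H has_derivative DH) (at x)" and sym: "\<forall>x. transpose (H x) = H x"
  shows "transpose (DH v) = DH v"
proof -
  have "((\<lambda>x. transpose (H x)) has_derivative (\<lambda>v. transpose (DH v))) (at x)"
    using bounded_linear.has_derivative[OF linear_transpose d] .
  then have "(H has_derivative (\<lambda>v. transpose (DH v))) (at x)" using sym by simp
  then have "(\<lambda>v. transpose (DH v)) = DH" using has_derivative_unique[OF _ d] by blast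
  then show ?thesis by metis
qed

lemma mv_uminus: "(- A) *v x = - (A *v x)" for A :: "real^'n^'m"
  by (metis diff_0 matrix_vector_mult_0 matrix_vector_mult_diff_rdistrib)

lemma skew_quad:
  fixes S :: "real^'n^'n"
  assumes "skew_sym S"
  shows "x \<bullet> (S *v x) = 0"
proof -
  have "x \<bullet> (S *v x) = (transpose S *v x) \<bullet> x" by (rule inner_mv_transpose)
  also have "\<dots> = - (x \<bullet> (S *v x))"
    using assms by (simp add: skew_sym_def mv_uminus inner_commute)
  finally show ?thesis by simp
qed

lemma quad_poly_le: "a > 0 \<Longrightarrow> b * x - a * x^2 \<le> b^2 / (4 * a)" for a b x :: real
proof -
  assume a: "a > 0"
  have "0 \<le> (2 * a * x - b)^2" by simp
  then have "4 * a * (b * x - a * x^2) \<le> b^2" by (simp add: power2_eq_square algebra_simps)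
  then show ?thesis using a by (simp add: le_divide_eq mult.commute)
qed

lemma sq_over_sqrt: "y \<ge> 0 \<Longrightarrow> y - 1 \<le> y^2 / sqrt (1 + y^2)" for y :: real
proof -
  assume y: "y \<ge> 0"
  have s: "sqrt (1 + y^2) \<le> 1 + y"
    using y by (intro real_le_lsqrt) (auto simp: power2_eq_square algebra_simps)
  have sp: "sqrt (1 + y^2) > 0" by (simp add: add_pos_nonneg)
  have "(y - 1) * sqrt (1 + y^2) \<le> y^2"
  proof (cases "y \<le> 1")
    case True
    have "(y - 1) * sqrt (1 + y^2) \<le> 0" by (rule mult_nonpos_nonneg) (use True in auto)
    then show ?thesis by (smt (verit) zero_le_power2)
  next
    case False
    then have "(y - 1) * sqrt (1 + y^2) \<le> (y - 1) * (1 + y)" using s by (intro mult_left_mono) auto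
    also have "\<dots> \<le> y^2" by (simp add: power2_eq_square algebra_simps)
    finally show ?thesis .
  qed
  then show ?thesis using sp by (simp add: le_divide_eq)
qed

lemma thresh:
  fixes a b c0 d :: real
  assumes a: "a > 0" and d: "d > 0" and b: "b \<ge> 0" and c: "c0 \<ge> 0"
  shows "\<exists>X0 Y0. X0 \<ge> 0 \<and> Y0 \<ge> 0 \<and> (\<forall>x y. x \<ge> 0 \<longrightarrow> y \<ge> 0 \<longrightarrow> (x > X0 \<or> y > Y0) \<longrightarrow>
            - a * x^2 + b * x + c0 - d * (y^2 / sqrt (1 + y^2)) < 0)"
proof -
  define X0 where "X0 = max 1 ((b + c0 + 1) / a)"
  define Y0 where "Y0 = 1 + (b^2 / (4 * a) + c0 + 1) / d"
  have X0: "X0 \<ge> 1" unfolding X0_def by simp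
  have Y0: "Y0 \<ge> 1" unfolding Y0_def using a d b c by simp
  have "- a * x^2 + b * x + c0 - d * (y^2 / sqrt (1 + y^2)) < 0"
    if x: "x \<ge> 0" and y: "y \<ge> 0" and h: "x > X0 \<or> y > Y0" for x y
  proof -
    have nn: "d * (y^2 / sqrt (1 + y^2)) \<ge> 0" using d by simp
    show ?thesis
    proof (cases "x > X0")
      case True
      have x1: "x > 1" using True X0 by simp
      have "(b + c0 + 1) / a \<le> X0" unfolding X0_def by simp
      then have h1: "b + c0 + 1 \<le> a * X0" using a by (simp add: divide_le_eq mult.commute)
      have "(b + c0 + 1) * x \<le> a * X0 * x" using h1 x1 by (intro mult_right_mono) auto
      also have "a * X0 * x < a * x * x" using a True x1 by simp
      finally have "(b + c0 + 1) * x < a * x^2" by (simp add: power2_eq_square)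
      moreover have "c0 \<le> c0 * x" using c x1 by (simp add: mult_le_cancel_left1)
      ultimately show ?thesis using nn x1 by (simp add: algebra_simps)
    next
      case False
      then have yY: "y > Y0" using h by simp
      have "d * (y - 1) \<le> d * (y^2 / sqrt (1 + y^2))"
        by (rule mult_left_mono[OF sq_over_sqrt[OF y]]) (use d in simp)
      moreover have "d * (Y0 - 1) = b^2 / (4 * a) + c0 + 1" unfolding Y0_def using d by simp
      moreover have "d * (Y0 - 1) < d * (y - 1)" using yY d by simp
      moreover have "b * x - a * x^2 \<le> b^2 / (4 * a)" by (rule quad_poly_le[OF a])
      ultimately show ?thesis by linarith
    qed
  qed
  then show ?thesis using X0 Y0 by (intro exI[of _ X0] exI[of _ Y0]) auto
qed

lemma hd_split:
  fixes Hd Cm :: "real^'n^'n"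
  assumes sym: "transpose Hd = Hd" and sk: "skew_sym (Hd - 2 *\<^sub>R Cm)"
  shows "u \<bullet> (Hd *v v) = u \<bullet> (Cm *v v) + v \<bullet> (Cm *v u)"
proof -
  have "u \<bullet> ((Hd - 2 *\<^sub>R Cm) *v v) = (transpose (Hd - 2 *\<^sub>R Cm) *v u) \<bullet> v"
    by (rule inner_mv_transpose)
  also have "\<dots> = - (((Hd - 2 *\<^sub>R Cm) *v u) \<bullet> v)"
    using sk unfolding skew_sym_def by (simp only: mv_uminus inner_minus_left)
  finally have "u \<bullet> (Hd *v v) - 2 * (u \<bullet> (Cm *v v)) = - (v \<bullet> (Hd *v u)) + 2 * (v \<bullet> (Cm *v u))"
    by (simp add: matrix_vector_mult_diff_rdistrib scaleR_matrix_vector_assoc[symmetric]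
        inner_diff_right inner_diff_left inner_commute)
  moreover have "v \<bullet> (Hd *v u) = u \<bullet> (Hd *v v)" by (rule inner_mv_sym[OF sym])
  ultimately show ?thesis by linarith
qed

theorem corollary1:
  fixes H Hh :: "real^'n \<Rightarrow> real^'n^'n"
    and C Ch :: "real^'n \<Rightarrow> real^'n \<Rightarrow> real^'n^'n"
    and g gh :: "real^'n \<Rightarrow> real^'n"
    and DH :: "real^'n \<Rightarrow> real^'n \<Rightarrow> real^'n^'n"
    and qd qd1 qd2 q q1 q2 :: "real \<Rightarrow> real^'n"
    and Kp Kd :: "real^'n^'n"
    and X :: "'m::finite \<Rightarrow> (real^'n) \<times> (real^'n) \<times> (real^'n)"
    and Y :: "'m \<Rightarrow> real^'n"
    and sf lam sn :: "'n \<Rightarrow> real"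
    and L cC cq cq1 cq2 \<alpha> \<beta> :: real
  assumes rot_H: "\<forall>x i. H (x + (2 * pi) *\<^sub>R axis i 1) = H x"
    and rot_C: "\<forall>x v i. C (x + (2 * pi) *\<^sub>R axis i 1) v = C x v"
    and rot_g: "\<forall>x i. g (x + (2 * pi) *\<^sub>R axis i 1) = g x"
    and P1_pd: "\<forall>x. sym_pos_def (H x)"
    and P1_diff: "\<forall>x. (H has_derivative DH x) (at x)"
    and P1_skew: "\<forall>x v. skew_sym (DH x v - 2 *\<^sub>R C x v)"
    and P2_bdd: "\<exists>cH. \<forall>x. mnorm (H x) \<le> cH"
    and P2_L: "L > 0" "\<forall>x x'. mnorm (H x - H x') \<le> L * norm (x - x')"
    and P2_C: "\<forall>x v. mnorm (C x v) \<le> cC * norm v"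
    and P2_Csym: "\<forall>x v p. C x v *v p = C x p *v v"
    and C1_deriv: "\<forall>t\<ge>0. (qd has_vector_derivative qd1 t) (at t within {0..})"
                  "\<forall>t\<ge>0. (qd1 has_vector_derivative qd2 t) (at t within {0..})"
    and C1_bdd: "\<forall>t\<ge>0. norm (qd t) < cq" "\<forall>t\<ge>0. norm (qd1 t) < cq1"
                "\<forall>t\<ge>0. norm (qd2 t) < cq2"
    and C2: "sym_pos_def Kp" "sym_pos_def Kd" "sigma_min Kd > \<beta>"
    and C3_nonneg: "\<alpha> \<ge> 0" "\<beta> \<ge> 0"
    and C3_bound: "\<forall>t\<ge>0. \<forall>x v.
        norm (H x *v qd2 t + C x v *v qd1 t + g x - Hh x *v qd2 t - Ch x v *v qd1 t - gh x)
          \<le> \<alpha> + \<beta> * norm v"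
    and C3_cont: "continuous_on UNIV
        (\<lambda>(a, b, v, x). H x *v a + C x v *v b + g x - Hh x *v a - Ch x v *v b - gh x)"
    and GP_hyp: "\<forall>i. sf i > 0" "\<forall>i. lam i > 0"
    and traj_deriv: "\<forall>t\<ge>0. (q has_vector_derivative q1 t) (at t within {0..})"
                    "\<forall>t\<ge>0. (q1 has_vector_derivative q2 t) (at t within {0..})"
    and closed_loop: "\<forall>t\<ge>0.
        H (q t) *v q2 t + C (q t) (q1 t) *v q1 t + g (q t) =
          Hh (q t) *v qd2 t + Ch (q t) (q1 t) *v qd1 t + gh (q t)
          + gp_mean_vec sf lam sn X Y (qd2 t, qd1 t, q t)
          - Kd *v (q1 t - qd1 t) - Kp *v (q t - qd t)"
  shows "\<exists>B. \<forall>t\<ge>0. norm (q t - qd t) \<le> B"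
proof -
  obtain cH where cH: "\<forall>x. mnorm (H x) \<le> cH" using P2_bdd by blast
  have cH0: "cH \<ge> 0" using cH[rule_format, of 0] mnorm_ge0[of "H 0"] by linarith
  have cC0: "cC \<ge> 0"
  proof -
    have "0 \<le> mnorm (C 0 (axis undefined 1))" by (rule mnorm_ge0)
    also have "\<dots> \<le> cC * norm (axis undefined (1::real) :: real^'n)" using P2_C by blast
    finally show ?thesis by simp
  qed
  have cq1: "cq1 > 0" using C1_bdd(2)[rule_format, of 0] norm_ge_zero[of "qd1 0"] by linarith
  obtain Mu where Mu: "\<forall>x. norm (gp_mean_vec sf lam sn X Y x) \<le> Mu" using gp_vec_bounded by blast
  have Mu0: "Mu \<ge> 0" using Mu norm_ge_zero by (meson order_trans)
  obtain lk where lk: "lk > 0" "\<forall>x. lk * (norm x)^2 \<le> x \<bullet> (Kd *v x)" "sigma_min Kd \<le> lk"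
    using spd_lower[OF C2(2)] by blast
  obtain lp where lp: "lp > 0" "\<forall>x. lp * (norm x)^2 \<le> x \<bullet> (Kp *v x)"
    using spd_lower[OF C2(1)] by blast
  have lkb: "lk > \<beta>" using C2(3) lk(3) by linarith
  have symKp: "transpose Kp = Kp" using C2(1) by (simp add: sym_pos_def_def)
  have symH: "\<forall>x. transpose (H x) = H x" using P1_pd by (simp add: sym_pos_def_def)
  have symDH: "\<And>x v. transpose (DH x v) = DH x v"
    using deriv_sym[OF P1_diff[rule_format] symH] by blast
  have psdH: "\<And>x z. z \<bullet> (H x *v z) \<ge> 0"
  proof -
    fix x z show "z \<bullet> (H x *v z) \<ge> 0"
      using P1_pd by (cases "z = 0") (auto simp: sym_pos_def_def less_imp_le)
  qed
  define kd where "kd = mnorm Kd"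
  define kp where "kp = mnorm Kp"
  have kd0: "kd \<ge> 0" "kp \<ge> 0" by (simp_all add: kd_def kp_def mnorm_ge0)
  define k1 where "k1 = 2 * cH + cC"
  define k2 where "k2 = cC * cq1 + \<beta> + kd"
  define P0 where "P0 = Mu + \<alpha> + \<beta> * cq1"
  define \<epsilon> where "\<epsilon> = (lk - \<beta>) / (2 * (k1 + 1))"
  have k10: "k1 \<ge> 0" "k2 \<ge> 0" "P0 \<ge> 0" using cH0 cC0 cq1 kd0 Mu0 C3_nonneg
    by (simp_all add: k1_def k2_def P0_def)
  have eps0: "\<epsilon> > 0" using lkb k10 by (simp add: \<epsilon>_def)
  define a where "a = (lk - \<beta>) / 2"
  have epsk1: "\<epsilon> * k1 \<le> a"
  proof -
    have "\<epsilon> * k1 = a * (k1 / (k1 + 1))" using k10 by (simp add: \<epsilon>_def a_def field_simps)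
    also have "\<dots> \<le> a * 1" using k10 lkb by (intro mult_left_mono) (auto simp: a_def)
    finally show ?thesis by simp
  qed
  have a0: "a > 0" using lkb by (simp add: a_def)
  define b where "b = P0 + \<epsilon> * k2"
  define c0 where "c0 = \<epsilon> * P0"
  define d where "d = \<epsilon> * lp"
  obtain X0 Y0 where XY: "X0 \<ge> 0" "Y0 \<ge> 0"
    "\<forall>x y. x \<ge> 0 \<longrightarrow> y \<ge> 0 \<longrightarrow> (x > X0 \<or> y > Y0) \<longrightarrow>
            - a * x^2 + b * x + c0 - d * (y^2 / sqrt (1 + y^2)) < 0"
    using thresh[OF a0, of d b c0] eps0 lp k10 by (auto simp: d_def b_def c0_def)
  define e where "e = (\<lambda>t. q t - qd t)"
  define e1 where "e1 = (\<lambda>t. q1 t - qd1 t)"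
  define e2 where "e2 = (\<lambda>t. q2 t - qd2 t)"
  have de: "\<forall>t\<ge>0. (e has_vector_derivative e1 t) (at t within {0..})"
    using traj_deriv(1) C1_deriv(1) unfolding e_def e1_def by (auto intro: has_vector_derivative_diff)
  have de1: "\<forall>t\<ge>0. (e1 has_vector_derivative e2 t) (at t within {0..})"
    using traj_deriv(2) C1_deriv(2) unfolding e1_def e2_def by (auto intro: has_vector_derivative_diff)
  have dH: "\<forall>t\<ge>0. ((\<lambda>t. H (q t)) has_vector_derivative DH (q t) (q1 t)) (at t within {0..})"
  proof (intro allI impI)
    fix t :: real assume t: "t \<ge> 0"
    have "(H has_derivative DH (q t)) (at (q t) within q ` {0..})"
      using P1_diff has_derivative_at_withinI by blast
    from vector_derivative_diff_chain_within[OF traj_deriv(1)[rule_format, OF t] this]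
    show "((\<lambda>t. H (q t)) has_vector_derivative DH (q t) (q1 t)) (at t within {0..})"
      by (simp add: o_def)
  qed
  have dKp: "((\<lambda>t. Kp) has_vector_derivative 0) (at t within {0..})" for t by simp
  define ph where "ph = (\<lambda>t. inverse (sqrt (1 + e t \<bullet> e t)) *\<^sub>R e t)"
  have "\<forall>t\<ge>0. \<exists>p. (ph has_vector_derivative p) (at t within {0..}) \<and> norm p \<le> 2 * norm (e1 t)"
    unfolding ph_def using phi_deriv de by blast
  then obtain P where P: "\<forall>t\<ge>0. (ph has_vector_derivative P t) (at t within {0..}) \<and> norm (P t) \<le> 2 * norm (e1 t)"
    by metis
  define W where "W = (\<lambda>t. (1/2) * (e1 t \<bullet> (H (q t) *v e1 t)) + (1/2) * (e t \<bullet> (Kp *v e t))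
       + \<epsilon> * (ph t \<bullet> (H (q t) *v e1 t)))"
  define W' where "W' = (\<lambda>t. (1/2) * (e2 t \<bullet> (H (q t) *v e1 t) + e1 t \<bullet> (DH (q t) (q1 t) *v e1 t) + e1 t \<bullet> (H (q t) *v e2 t))
       + (1/2) * (e1 t \<bullet> (Kp *v e t) + e t \<bullet> (0 *v e t) + e t \<bullet> (Kp *v e1 t))
       + \<epsilon> * (P t \<bullet> (H (q t) *v e1 t) + ph t \<bullet> (DH (q t) (q1 t) *v e1 t) + ph t \<bullet> (H (q t) *v e2 t)))"
  have dW: "\<forall>t\<ge>0. (W has_real_derivative W' t) (at t within {0..})"
  proof (intro allI impI)
    fix t :: real assume t: "t \<ge> 0"
    note q1 = quad_deriv[OF de1[rule_format, OF t] dH[rule_format, OF t] de1[rule_format, OF t]]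
    note q2 = quad_deriv[OF de[rule_format, OF t] dKp de[rule_format, OF t]]
    note q3 = quad_deriv[OF conjunct1[OF P[rule_format, OF t]] dH[rule_format, OF t] de1[rule_format, OF t]]
    show "(W has_real_derivative W' t) (at t within {0..})"
      unfolding W_def W'_def
      by (intro DERIV_add DERIV_cmult q1 q2 q3)
  qed
  have Wder_bound: "W' t \<le> - a * (norm (e1 t))^2 + b * norm (e1 t) + c0 - d * ((norm (e t))^2 / sqrt (1 + (norm (e t))^2))"
    if t: "t \<ge> 0" for t
  proof -
    define x where "x = norm (e1 t)"
    define y where "y = norm (e t)"
    define sq where "sq = sqrt (1 + e t \<bullet> e t)"
    have sq: "sq = sqrt (1 + y^2)" by (simp add: sq_def y_def power2_norm_eq_inner)
    have sq1: "sq \<ge> 1" by (simp add: sq_def)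
    define Hq where "Hq = H (q t)"
    define Cq where "Cq = C (q t) (q1 t)"
    define Hd where "Hd = DH (q t) (q1 t)"
    define mu where "mu = gp_mean_vec sf lam sn X Y (qd2 t, qd1 t, q t)"
    define f where "f = H (q t) *v qd2 t + C (q t) (q1 t) *v qd1 t + g (q t) - Hh (q t) *v qd2 t - Ch (q t) (q1 t) *v qd1 t - gh (q t)"
    have dyn: "Hq *v e2 t = mu - f - Kd *v e1 t - Kp *v e t - Cq *v e1 t"
      using closed_loop[rule_format, OF t]
      unfolding Hq_def Cq_def mu_def f_def e_def e1_def e2_def
      by (simp add: matrix_vector_mult_diff_distrib algebra_simps)
    have nq1: "norm (q1 t) \<le> x + cq1"
    proof -
      have "q1 t = e1 t + qd1 t" by (simp add: e1_def)
      then have "norm (q1 t) \<le> norm (e1 t) + norm (qd1 t)" by (metis norm_triangle_ineq)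
      then show ?thesis using C1_bdd(2) t by (simp add: x_def) (smt (verit))
    qed
    have x0: "x \<ge> 0" "y \<ge> 0" by (simp_all add: x_def y_def)
    have nmuf: "norm (mu - f) \<le> P0 + \<beta> * x"
    proof -
      have "norm (mu - f) \<le> norm mu + norm f" by (rule norm_triangle_ineq4)
      also have "\<dots> \<le> Mu + (\<alpha> + \<beta> * norm (q1 t))"
        using Mu C3_bound t unfolding mu_def f_def by (intro add_mono) auto
      also have "\<dots> \<le> Mu + (\<alpha> + \<beta> * (x + cq1))"
        using nq1 C3_nonneg by (simp add: mult_left_mono)
      finally show ?thesis by (simp add: P0_def algebra_simps)
    qed
    have nph: "norm (ph t) \<le> 1"
    proof -
      have "norm (ph t) = y / sq" by (simp add: ph_def sq_def y_def divide_inverse_commute)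
      also have "\<dots> \<le> 1"
      proof -
        have "0 < 1 + y^2" by (simp add: add_pos_nonneg)
        then show ?thesis using sq x0 by (simp add: divide_le_eq_1 real_le_rsqrt)
      qed
      finally show ?thesis .
    qed
    have phKp: "ph t \<bullet> (Kp *v e t) \<ge> lp * y^2 / sq"
    proof -
      have "ph t \<bullet> (Kp *v e t) = (e t \<bullet> (Kp *v e t)) / sq" by (simp add: ph_def sq_def divide_inverse_commute)
      moreover have "lp * y^2 \<le> e t \<bullet> (Kp *v e t)" using lp(2) by (simp add: y_def)
      ultimately show ?thesis using sq1 by (simp add: divide_right_mono)
    qed
    have symHq: "transpose Hq = Hq" using symH by (simp add: Hq_def)
    have split: "u \<bullet> (Hd *v v) = u \<bullet> (Cq *v v) + v \<bullet> (Cq *v u)" for u v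
      using hd_split[OF symDH P1_skew[rule_format]] by (simp add: Hd_def Cq_def)
    have W'eq: "W' t = (e1 t \<bullet> (mu - f) - e1 t \<bullet> (Kd *v e1 t))
       + \<epsilon> * (P t \<bullet> (Hq *v e1 t) + e1 t \<bullet> (Cq *v ph t) + ph t \<bullet> (mu - f) - ph t \<bullet> (Kd *v e1 t) - ph t \<bullet> (Kp *v e t))"
    proof -
      have s1: "e2 t \<bullet> (Hq *v e1 t) = e1 t \<bullet> (Hq *v e2 t)" by (rule inner_mv_sym[OF symHq])
      have s2: "e1 t \<bullet> (Kp *v e t) = e t \<bullet> (Kp *v e1 t)" by (rule inner_mv_sym[OF symKp])
      show ?thesis
        unfolding W'_def Hq_def[symmetric] Hd_def[symmetric]
        unfolding s1 s2 split dyn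
        by (simp add: inner_diff_right algebra_simps s2)
    qed
    have T1: "e1 t \<bullet> (mu - f) - e1 t \<bullet> (Kd *v e1 t) \<le> P0 * x + \<beta> * x^2 - lk * x^2"
    proof -
      have "e1 t \<bullet> (mu - f) \<le> x * norm (mu - f)" unfolding x_def by (rule norm_cauchy_schwarz)
      also have "\<dots> \<le> x * (P0 + \<beta> * x)" using nmuf x0 by (simp add: mult_left_mono)
      finally have "e1 t \<bullet> (mu - f) \<le> x * (P0 + \<beta> * x)" .
      moreover have "lk * x^2 \<le> e1 t \<bullet> (Kd *v e1 t)" using lk(2) by (simp add: x_def)
      ultimately show ?thesis by (simp add: algebra_simps power2_eq_square)
    qed
    have b1: "P t \<bullet> (Hq *v e1 t) \<le> 2 * cH * x^2"
    proof -
      have "P t \<bullet> (Hq *v e1 t) \<le> mnorm Hq * norm (P t) * x" using quad_bound[of "P t" Hq "e1 t"] by (simp add: x_def)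
      also have "\<dots> \<le> cH * (2 * x) * x"
        using cH cH0 P t x0 mnorm_ge0[of Hq] unfolding Hq_def x_def
        by (intro mult_right_mono mult_mono) auto
      finally show ?thesis by (simp add: power2_eq_square)
    qed
    have b2: "e1 t \<bullet> (Cq *v ph t) \<le> cC * x^2 + cC * cq1 * x"
    proof -
      have "e1 t \<bullet> (Cq *v ph t) \<le> mnorm Cq * x * norm (ph t)" using quad_bound[of "e1 t" Cq "ph t"] by (simp add: x_def)
      also have "\<dots> \<le> (cC * (x + cq1)) * x * 1"
      proof (intro mult_mono)
        show "mnorm Cq \<le> cC * (x + cq1)"
          using P2_C nq1 cC0 unfolding Cq_def by (meson mult_left_mono order_trans)
      qed (use nph x0 cC0 cq1 mnorm_ge0 in auto)
      finally show ?thesis by (simp add: power2_eq_square algebra_simps)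
    qed
    have b3: "ph t \<bullet> (mu - f) \<le> P0 + \<beta> * x"
    proof -
      have "ph t \<bullet> (mu - f) \<le> norm (ph t) * norm (mu - f)" by (rule norm_cauchy_schwarz)
      also have "\<dots> \<le> 1 * (P0 + \<beta> * x)" using nph nmuf by (intro mult_mono) auto
      finally show ?thesis by simp
    qed
    have b4: "- (ph t \<bullet> (Kd *v e1 t)) \<le> kd * x"
    proof -
      have "\<bar>ph t \<bullet> (Kd *v e1 t)\<bar> \<le> kd * norm (ph t) * x" using quad_bound[of "ph t" Kd "e1 t"] by (simp add: x_def kd_def)
      also have "\<dots> \<le> kd * 1 * x" using nph x0 kd0 by (intro mult_right_mono mult_left_mono) auto
      finally show ?thesis by simp
    qed
    have T2: "P t \<bullet> (Hq *v e1 t) + e1 t \<bullet> (Cq *v ph t) + ph t \<bullet> (mu - f) - ph t \<bullet> (Kd *v e1 t) - ph t \<bullet> (Kp *v e t)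
        \<le> k1 * x^2 + k2 * x + P0 - lp * y^2 / sq"
      using b1 b2 b3 b4 phKp by (simp add: k1_def k2_def algebra_simps)
    have T2e: "\<epsilon> * (P t \<bullet> (Hq *v e1 t) + e1 t \<bullet> (Cq *v ph t) + ph t \<bullet> (mu - f) - ph t \<bullet> (Kd *v e1 t) - ph t \<bullet> (Kp *v e t))
        \<le> \<epsilon> * (k1 * x^2 + k2 * x + P0 - lp * y^2 / sq)"
      using T2 eps0 by (simp add: mult_left_mono)
    have ek: "\<epsilon> * k1 * x^2 \<le> a * x^2" using epsk1 by (simp add: mult_right_mono)
    have "W' t \<le> P0 * x + \<beta> * x^2 - lk * x^2 + \<epsilon> * (k1 * x^2 + k2 * x + P0 - lp * y^2 / sq)"
      using W'eq T1 T2e by linarith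
    also have "\<dots> \<le> - a * x^2 + b * x + c0 - d * (y^2 / sq)"
    proof -
      have "P0 * x + \<beta> * x^2 - lk * x^2 + \<epsilon> * (k1 * x^2 + k2 * x + P0 - lp * y^2 / sq)
          = (- a * x^2 + b * x + c0 - d * (y^2 / sq)) - (a * x^2 - \<epsilon> * k1 * x^2)"
        by (simp add: a_def b_def c0_def d_def field_simps)
      then show ?thesis using ek by linarith
    qed
    finally show ?thesis by (simp add: x_def y_def sq)
  qed
  have nph_all: "norm (ph t) \<le> 1" for t
  proof -
    have "0 < 1 + (norm (e t))^2" by (simp add: add_pos_nonneg)
    moreover have "norm (ph t) = norm (e t) / sqrt (1 + (norm (e t))^2)"
      by (simp add: ph_def divide_inverse_commute power2_norm_eq_inner)
    ultimately show ?thesis by (simp add: divide_le_eq_1 real_le_rsqrt)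
  qed
  have Wup: "W t \<le> (1/2) * cH * (norm (e1 t))^2 + (1/2) * kp * (norm (e t))^2 + \<epsilon> * cH * norm (e1 t)" for t
  proof -
    have "e1 t \<bullet> (H (q t) *v e1 t) \<le> mnorm (H (q t)) * norm (e1 t) * norm (e1 t)"
      using quad_bound[of "e1 t" "H (q t)" "e1 t"] by simp
    also have "\<dots> \<le> cH * norm (e1 t) * norm (e1 t)"
      using cH by (intro mult_right_mono) auto
    finally have h1: "e1 t \<bullet> (H (q t) *v e1 t) \<le> cH * (norm (e1 t))^2" by (simp add: power2_eq_square mult.assoc)
    have "e t \<bullet> (Kp *v e t) \<le> kp * norm (e t) * norm (e t)"
      using quad_bound[of "e t" Kp "e t"] by (simp add: kp_def)
    then have h2: "e t \<bullet> (Kp *v e t) \<le> kp * (norm (e t))^2" by (simp add: power2_eq_square mult.assoc)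
    have "ph t \<bullet> (H (q t) *v e1 t) \<le> mnorm (H (q t)) * norm (ph t) * norm (e1 t)"
      using quad_bound[of "ph t" "H (q t)" "e1 t"] by simp
    also have "\<dots> \<le> cH * 1 * norm (e1 t)"
      using cH cH0 nph_all[of t] mnorm_ge0[of "H (q t)"] by (intro mult_right_mono mult_mono) auto
    finally have h3: "\<epsilon> * (ph t \<bullet> (H (q t) *v e1 t)) \<le> \<epsilon> * (cH * norm (e1 t))"
      using eps0 by (simp add: mult_left_mono)
    show ?thesis unfolding W_def using h1 h2 h3 by (simp add: algebra_simps)
  qed
  define R where "R = (1/2) * cH * X0^2 + (1/2) * kp * Y0^2 + \<epsilon> * cH * X0"
  have neg: "\<forall>t\<ge>0. W t > R \<longrightarrow> W' t < 0"
  proof (intro allI impI)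
    fix t :: real assume t: "t \<ge> 0" and WR: "W t > R"
    have "norm (e1 t) > X0 \<or> norm (e t) > Y0"
    proof (rule ccontr)
      assume "\<not> (norm (e1 t) > X0 \<or> norm (e t) > Y0)"
      then have le: "norm (e1 t) \<le> X0" "norm (e t) \<le> Y0" by auto
      have "(norm (e1 t))^2 \<le> X0^2" "(norm (e t))^2 \<le> Y0^2" using le by (auto intro: power_mono)
      then have m1: "(1/2) * cH * (norm (e1 t))^2 \<le> (1/2) * cH * X0^2"
        and m2: "(1/2) * kp * (norm (e t))^2 \<le> (1/2) * kp * Y0^2"
        using cH0 kd0 by (auto intro: mult_left_mono)
      have m3: "\<epsilon> * cH * norm (e1 t) \<le> \<epsilon> * cH * X0"
        using le cH0 eps0 by (intro mult_left_mono) auto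
      have "W t \<le> R" using Wup[of t] m1 m2 m3 unfolding R_def by linarith
      then show False using WR by simp
    qed
    then have "- a * (norm (e1 t))^2 + b * norm (e1 t) + c0 - d * ((norm (e t))^2 / sqrt (1 + (norm (e t))^2)) < 0"
      using XY(3) by auto
    then show "W' t < 0" using Wder_bound[OF t] by linarith
  qed
  have Wb: "\<forall>t\<ge>0. W t \<le> max (W 0) R" by (rule bound_by_deriv[OF dW neg])
  define B where "B = max (W 0) R"
  have Wlow: "W t \<ge> (1/2) * lp * (norm (e t))^2 - (1/2) * \<epsilon>^2 * cH" for t
  proof -
    define z where "z = e1 t + \<epsilon> *\<^sub>R ph t"
    have symHq: "transpose (H (q t)) = H (q t)" using symH by simp
    have "0 \<le> z \<bullet> (H (q t) *v z)" by (rule psdH)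
    also have "z \<bullet> (H (q t) *v z) = e1 t \<bullet> (H (q t) *v e1 t) + 2 * \<epsilon> * (ph t \<bullet> (H (q t) *v e1 t))
        + \<epsilon>^2 * (ph t \<bullet> (H (q t) *v ph t))"
      using inner_mv_sym[OF symHq, of "e1 t" "ph t"]
      by (simp add: z_def matrix_vector_right_distrib matrix_vector_mult_scaleR inner_add_left inner_add_right
          algebra_simps power2_eq_square)
    finally have z0: "0 \<le> e1 t \<bullet> (H (q t) *v e1 t) + 2 * \<epsilon> * (ph t \<bullet> (H (q t) *v e1 t))
        + \<epsilon>^2 * (ph t \<bullet> (H (q t) *v ph t))" .
    have "ph t \<bullet> (H (q t) *v ph t) \<le> mnorm (H (q t)) * norm (ph t) * norm (ph t)"
      using quad_bound[of "ph t" "H (q t)" "ph t"] by simp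
    also have "\<dots> \<le> cH * 1 * 1"
      using cH cH0 nph_all[of t] mnorm_ge0[of "H (q t)"] by (intro mult_mono) auto
    finally have "\<epsilon>^2 * (ph t \<bullet> (H (q t) *v ph t)) \<le> \<epsilon>^2 * cH" by (simp add: mult_left_mono)
    moreover have "lp * (norm (e t))^2 \<le> e t \<bullet> (Kp *v e t)" using lp(2) by simp
    ultimately show ?thesis using z0 unfolding W_def by (simp add: algebra_simps)
  qed
  show ?thesis
  proof (intro exI[of _ "sqrt ((2 * B + \<epsilon>^2 * cH) / lp)"] allI impI)
    fix t :: real assume t: "t \<ge> 0"
    have "(1/2) * lp * (norm (e t))^2 - (1/2) * \<epsilon>^2 * cH \<le> B"
      using Wlow[of t] Wb[rule_format, OF t] unfolding B_def by linarith
    then have "lp * (norm (e t))^2 \<le> 2 * B + \<epsilon>^2 * cH" by simp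
    then have "(norm (e t))^2 \<le> (2 * B + \<epsilon>^2 * cH) / lp" using lp(1) by (simp add: le_divide_eq mult.commute)
    then have "sqrt ((norm (e t))^2) \<le> sqrt ((2 * B + \<epsilon>^2 * cH) / lp)" by (rule real_sqrt_le_mono)
    then show "norm (q t - qd t) \<le> sqrt ((2 * B + \<epsilon>^2 * cH) / lp)" by (simp add: e_def)
  qed
qed

end
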